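(* In the symmetric-erasure retransmission model described in the context ("waits do not loop"): let $\tau\ge 1$, $\ell\ge 1$, and let $u_1,\dots,u_{\ell+1}$ be vertices with $u_{i+1}\in\mathcal N_{u_i}$ for $1\le i\le \ell$, such that for every $1\le i\le\ell$ the event $W^{(\tau+i-1)}_{u_{i+1}u_i}$ occurs, and for every $2\le i\le \ell$ the event $W^{(\tau+i-1)}_{u_{i+1}u_i}$ is caused by $W^{(\tau+i-2)}_{u_iu_{i-1}}$. Then the vertices $u_1,\dots,u_\ell$ are pairwise distinct.
   Context: Let $\mathcal G=(\mathcal V,\mathcal E)$ be a finite connected undirected simple graph with $N=|\mathcal V|$ vertices and maximum degree $\Delta$; $\mathcal N_v$ denotes the set of neighbours of $v$. Fix an erasure probability $p\in[0,1]$. Erasures are symmetric: for every undirected edge $e\in\mathcal E$ and every round $t\ge 1$ there is a random variable $S^e_t\in\{0,1\}$ with $P(S^e_t=1)=1-p$ ($S^e_t=1$ means the edge works in round $t$, $S^e_t=0$ means the packets in both directions on $e$ are erased in round $t$), and all these variables are mutually independent. The retransmission protocol for distributed consensus is described by integer state variables $n_{vu}(t)$, for every ordered pair $(v,u)$ with $u\in\mathcal N_v$ and every $t\ge 0$ (the index of the latest iterate of node $u$ available at node $v$ after round $t$), together with $n_v(t)=1+\min_{u\in\mathcal N_v} n_{vu}(t)$ (the number of iterations of the consensus update $x^v_{k+1}=x^v_k-\epsilon\sum_{u\in\mathcal N_v}(x^v_k-x^u_k)$ that node $v$ has completed after round $t$). Initially $n_{vu}(0)=-1$ for all such pairs (so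 $n_v(0)=0$), and for all $t\ge 0$ $$n_{vu}(t+1)=n_{vu}(t)+S^{\{u,v\}}_{t+1}\cdot\mathbf 1\{n_u(t)>n_{vu}(t)\}.$$ Node $u$ is said to transmit a "wait" to node $v$ in round $t+1$ iff $n_{vu}(t)=n_u(t)$. For $\tau\ge1$ and $u\in\mathcal N_v$, $W^{(\tau)}_{uv}$ denotes the event that node $v$ transmits a wait to node $u$ in round $\tau$, i.e. $n_{uv}(\tau-1)=n_v(\tau-1)$. For vertices $v,u,u'$ with $u\in\mathcal N_v$, $u'\in\mathcal N_u$, if both $W^{(\tau)}_{uv}$ and $W^{(\tau+1)}_{u'u}$ occur, then $W^{(\tau)}_{uv}$ is said to cause $W^{(\tau+1)}_{u'u}$ if (a) $n_u(\tau-1)=1+n_{uv}(\tau-1)$ and (b) $n_{u'u}(\tau)=n_u(\tau)$. *)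

theory Defs
  imports Main
begin

text \<open>Simple graph given by an adjacency relation E on a vertex set V.
  A realization of the erasure process: S e t (e an undirected edge {u,v},
  t \<ge> 1 a round) is True iff edge e works in round t.\<close>

definition simple_connected_graph :: "'a set \<Rightarrow> ('a \<Rightarrow> 'a \<Rightarrow> bool) \<Rightarrow> bool" where
  "simple_connected_graph V E \<longleftrightarrow>
     finite V \<and> V \<noteq> {} \<and>
     (\<forall>u v. E u v \<longrightarrow> u \<in> V \<and> v \<in> V) \<and>
     (\<forall>u v. E u v \<longrightarrow> E v u) \<and>
     (\<forall>v. \<not> E v v) \<and>
     (\<forall>u\<in>V. \<forall>v\<in>V. E\<^sup>*\<^sup>* u v)"

definition node_count :: "('a \<Rightarrow> 'a \<Rightarrow> bool) \<Rightarrow> ('a \<Rightarrow> 'a \<Rightarrow> int) \<Rightarrow> 'a \<Rightarrow> int" where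
  "node_count E m v = 1 + Min {m v u | u. E v u}"

fun nvu :: "('a \<Rightarrow> 'a \<Rightarrow> bool) \<Rightarrow> ('a set \<Rightarrow> nat \<Rightarrow> bool) \<Rightarrow> nat \<Rightarrow> 'a \<Rightarrow> 'a \<Rightarrow> int" where
  "nvu E S 0 = (\<lambda>v u. -1)"
| "nvu E S (Suc t) = (\<lambda>v u. nvu E S t v u +
      (if S {u, v} (Suc t) \<and> node_count E (nvu E S t) u > nvu E S t v u then 1 else 0))"

definition nv :: "('a \<Rightarrow> 'a \<Rightarrow> bool) \<Rightarrow> ('a set \<Rightarrow> nat \<Rightarrow> bool) \<Rightarrow> nat \<Rightarrow> 'a \<Rightarrow> int" where
  "nv E S t v = node_count E (nvu E S t) v"

text \<open>W^{(tau)}_{uv}: node v transmits a wait to node u in round tau (tau \<ge> 1).\<close>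
definition wait_event :: "('a \<Rightarrow> 'a \<Rightarrow> bool) \<Rightarrow> ('a set \<Rightarrow> nat \<Rightarrow> bool) \<Rightarrow> nat \<Rightarrow> 'a \<Rightarrow> 'a \<Rightarrow> bool" where
  "wait_event E S \<tau> u v \<longleftrightarrow> 1 \<le> \<tau> \<and> E v u \<and> nvu E S (\<tau> - 1) u v = nv E S (\<tau> - 1) v"

definition causes :: "('a \<Rightarrow> 'a \<Rightarrow> bool) \<Rightarrow> ('a set \<Rightarrow> nat \<Rightarrow> bool) \<Rightarrow> nat \<Rightarrow> 'a \<Rightarrow> 'a \<Rightarrow> 'a \<Rightarrow> bool" where
  "causes E S \<tau> u v u' \<longleftrightarrow>
     wait_event E S \<tau> u v \<and> wait_event E S (\<tau> + 1) u' u \<and>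
     nv E S (\<tau> - 1) u = 1 + nvu E S (\<tau> - 1) u v \<and>
     nvu E S \<tau> u' u = nv E S \<tau> u"

end

theory Submission
  imports Defs
begin

lemma nc_img: "{m v u | u. E v u} = (\<lambda>u. m v u) ` {u. E v u}" by auto

lemma nc_mono:
  assumes "finite {x. E v x}" "{x. E v x} \<noteq> {}" "\<forall>x. E v x \<longrightarrow> m1 v x \<le> m2 v x"
  shows "node_count E m1 v \<le> node_count E m2 v"
proof -
  let ?A = "{x. E v x}"
  have f2: "finite ((\<lambda>u. m2 v u) ` ?A)" "(\<lambda>u. m2 v u) ` ?A \<noteq> {}" using assms by auto
  have f1: "finite ((\<lambda>u. m1 v u) ` ?A)" "(\<lambda>u. m1 v u) ` ?A \<noteq> {}" using assms by auto
  obtain x0 where x0: "x0 \<in> ?A" "Min ((\<lambda>u. m2 v u) ` ?A) = m2 v x0"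
    using Min_in[OF f2] by auto
  have "Min ((\<lambda>u. m1 v u) ` ?A) \<le> m1 v x0" using f1 x0 by (intro Min_le) auto
  also have "\<dots> \<le> m2 v x0" using assms x0 by auto
  finally show ?thesis unfolding node_count_def nc_img using x0 by simp
qed

lemma nc_step:
  assumes "finite {x. E v x}" "{x. E v x} \<noteq> {}" "\<forall>x. E v x \<longrightarrow> m2 v x \<le> m1 v x + 1"
  shows "node_count E m2 v \<le> node_count E m1 v + 1"
proof -
  let ?A = "{x. E v x}"
  have f2: "finite ((\<lambda>u. m2 v u) ` ?A)" "(\<lambda>u. m2 v u) ` ?A \<noteq> {}" using assms by auto
  have f1: "finite ((\<lambda>u. m1 v u) ` ?A)" "(\<lambda>u. m1 v u) ` ?A \<noteq> {}" using assms by auto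
  obtain x0 where x0: "x0 \<in> ?A" "Min ((\<lambda>u. m1 v u) ` ?A) = m1 v x0"
    using Min_in[OF f1] by auto
  have "Min ((\<lambda>u. m2 v u) ` ?A) \<le> m2 v x0" using f2 x0 by (intro Min_le) auto
  also have "\<dots> \<le> m1 v x0 + 1" using assms x0 by auto
  finally show ?thesis unfolding node_count_def nc_img using x0 by simp
qed

lemma nv_mono1:
  assumes "finite {x. E v x}" "{x. E v x} \<noteq> {}"
  shows "nv E S t v \<le> nv E S (Suc t) v"
  unfolding nv_def by (rule nc_mono[where E=E and v=v, OF assms]) simp

lemma nv_step1:
  assumes "finite {x. E v x}" "{x. E v x} \<noteq> {}"
  shows "nv E S (Suc t) v \<le> nv E S t v + 1"
  unfolding nv_def by (rule nc_step[where E=E and v=v, OF assms]) simp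

lemma nv_stepk:
  assumes "finite {x. E v x}" "{x. E v x} \<noteq> {}"
  shows "nv E S (t + k) v \<le> nv E S t v + int k"
proof (induction k)
  case 0 then show ?case by simp
next
  case (Suc k)
  have "nv E S (Suc (t + k)) v \<le> nv E S (t+k) v + 1" by (rule nv_step1[where E=E and v=v, OF assms])
  then show ?case using Suc by simp
qed

theorem lemma10:
  fixes V :: "'a set" and E :: "'a \<Rightarrow> 'a \<Rightarrow> bool" and S :: "'a set \<Rightarrow> nat \<Rightarrow> bool"
    and \<tau> l :: nat and u :: "nat \<Rightarrow> 'a"
  assumes "simple_connected_graph V E"
    and "1 \<le> \<tau>" and "1 \<le> l"
    and "\<forall>i\<in>{1..l+1}. u i \<in> V"
    and "\<forall>i\<in>{1..l}. E (u i) (u (i + 1))"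
    and "\<forall>i\<in>{1..l}. wait_event E S (\<tau> + i - 1) (u (i + 1)) (u i)"
    and "\<forall>i\<in>{2..l}. causes E S (\<tau> + i - 2) (u i) (u (i - 1)) (u (i + 1))"
  shows "inj_on u {1..l}"
proof -
  have finV: "finite V" and EV: "\<And>a b. E a b \<Longrightarrow> a \<in> V \<and> b \<in> V"
    using assms(1) unfolding simple_connected_graph_def by auto
  have fin: "finite {x. E w x}" for w
    by (rule finite_subset[OF _ finV]) (auto dest: EV)
  have ne: "{x. E (u k) x} \<noteq> {}" if "k \<in> {1..l}" for k
    using assms(5) that by auto
  have eq: "nv E S (\<tau> + k - 3) (u k) = 1 + nv E S (\<tau> + k - 3) (u (k - 1))"
    if "2 \<le> k" "k \<le> l" for k
  proof -
    have c: "causes E S (\<tau> + k - 2) (u k) (u (k - 1)) (u (k + 1))" using assms(7) that by auto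
    have t: "\<tau> + k - 2 - 1 = \<tau> + k - 3" by simp
    from c show ?thesis unfolding causes_def wait_event_def t by simp
  qed
  have mono: "nv E S t (u k) \<le> nv E S (Suc t) (u k)" if "k \<in> {1..l}" for k t
    by (rule nv_mono1[where E=E and v="u k", OF fin ne[OF that]])
  show ?thesis
  proof (rule inj_onI, rule ccontr)
    fix i j assume i: "i \<in> {1..l}" and j: "j \<in> {1..l}" and uij: "u i = u j" and ne_ij: "i \<noteq> j"
    have key: "\<And>i j. i \<in> {1..l} \<Longrightarrow> j \<in> {1..l} \<Longrightarrow> u i = u j \<Longrightarrow> j < i \<Longrightarrow> False"
    proof -
      fix i j assume i: "i \<in> {1..l}" and j: "j \<in> {1..l}" and uij: "u i = u j" and lt: "j < i"
      have P: "j + 1 + d \<le> l \<Longrightarrow>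
          nv E S (\<tau> + j + d - 2) (u (j + 1 + d)) \<ge> int d + 1 + nv E S (\<tau> + j - 2) (u j)" for d
      proof (induction d)
        case 0
        have "nv E S (\<tau> + (j+1) - 3) (u (j+1)) = 1 + nv E S (\<tau> + (j+1) - 3) (u (j + 1 - 1))"
          using eq[of "j+1"] 0 j by auto
        moreover have "\<tau> + (j+1) - 3 = \<tau> + j - 2" by simp
        ultimately show ?case by simp
      next
        case (Suc d)
        have e: "nv E S (\<tau> + (j+2+d) - 3) (u (j+2+d)) = 1 + nv E S (\<tau> + (j+2+d) - 3) (u (j+2+d - 1))"
          using eq[of "j+2+d"] Suc.prems by auto
        have t1: "\<tau> + (j+2+d) - 3 = Suc (\<tau> + j + d - 2)" using assms(2) j by auto
        have t2: "j+2+d-1 = j+1+d" by simp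
        have m: "nv E S (\<tau> + j + d - 2) (u (j+1+d)) \<le> nv E S (Suc (\<tau> + j + d - 2)) (u (j+1+d))"
          using mono[of "j+1+d"] Suc.prems by auto
        have "\<tau> + j + Suc d - 2 = Suc (\<tau> + j + d - 2)" using assms(2) j by auto
        moreover have "j + 1 + Suc d = j+2+d" by simp
        ultimately show ?case using e t1 t2 m Suc by simp
      qed
      define d where "d = i - j - 1"
      have d: "i = j + 1 + d" using lt unfolding d_def by simp
      have lo: "nv E S (\<tau> + j + d - 2) (u j) \<ge> int d + 1 + nv E S (\<tau> + j - 2) (u j)"
        using P[of d] d i uij by auto
      have "nv E S ((\<tau> + j - 2) + d) (u j) \<le> nv E S (\<tau> + j - 2) (u j) + int d"
        by (rule nv_stepk[where E=E and v="u j", OF fin ne[OF j]])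
      moreover have "(\<tau> + j - 2) + d = \<tau> + j + d - 2" using assms(2) j by auto
      ultimately show False using lo by simp
    qed
    show False
    proof (cases "j < i")
      case True then show ?thesis using key i j uij by blast
    next
      case False then have "i < j" using ne_ij by simp
      then show ?thesis using key i j uij by metis
    qed
  qed
qed

end
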